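(* Assume the standing assumptions, fix a function $h$ satisfying (h1)–(h4), and let $\sigma$ be a stopping time (with respect to an admissible filtration) with $\mathbf E\sigma<\infty$. Then $$\lim_{x\to\infty}\frac{\mathbf P(A_{\sigma,1}(x))}{\overline F(x)}=\mathbf E\sigma.$$
   Context: Standing assumptions: $\{\xi_n\}_{n\ge1}$ are i.i.d. real random variables with common distribution function $F$ and finite mean $\mathbf E\xi_1=-m<0$. $F$ is long-tailed: $\overline F(x)=1-F(x)>0$ for all $x$, and $\overline F(x-c)/\overline F(x)\to1$ as $x\to\infty$ for every fixed $c>0$. Notation: $S_0=0$ and $S_n=\sum_{i=1}^n\xi_i$. Admissible filtration: a stopping time $\sigma$ is taken with respect to a filtration $\{\mathcal F_n\}_{n\ge0}$ such that $\xi_n$ is $\mathcal F_n$-measurable and $\xi_{n+1}$ is independent of $\mathcal F_n$. The function $h:\mathbb R_+\to\mathbb R_+$ satisfies: - (h1) $h(x)\le x/2$ for all $x$; - (h2) $h(x)\to\infty$; - (h3) $\overline F(x-h(x))/\overline F(x)\to1$ as $x\to\infty$; - (h4) there exists $x_0$ with $h(x+t)\le h(x)+t$ for all $x\ge x_0$, $t\ge0$. For $x\ge0$, let $\mu(x)=\min\{n:S_n>x\}$, with $\min\emptyset=\infty$. Define $$A_{\sigma,1}(x)=\{\mu(x)\le\sigma,\ S_{\mu(x)-1}\le h(x)\}.$$ *)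

theory Defs
  imports "HOL-Probability.Probability"
begin

text \<open>Random walk \<open>S_n = \<xi>_1 + ... + \<xi>_n\<close>, \<open>S_0 = 0\<close> (the value \<open>\<xi> 0\<close> is unused).\<close>
definition rw :: "(nat \<Rightarrow> 'a \<Rightarrow> real) \<Rightarrow> nat \<Rightarrow> 'a \<Rightarrow> real" where
  "rw \<xi> n \<omega> = (\<Sum>i\<in>{1..n}. \<xi> i \<omega>)"

definition first_passage :: "(nat \<Rightarrow> 'a \<Rightarrow> real) \<Rightarrow> real \<Rightarrow> 'a \<Rightarrow> enat" where
  "first_passage \<xi> x \<omega> =
     (if \<exists>n. rw \<xi> n \<omega> > x then enat (LEAST n. rw \<xi> n \<omega> > x) else \<infinity>)"

definition A_sigma1 :: "'a measure \<Rightarrow> (nat \<Rightarrow> 'a \<Rightarrow> real) \<Rightarrow> ('a \<Rightarrow> enat) \<Rightarrow> (real \<Rightarrow> real)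
    \<Rightarrow> real \<Rightarrow> 'a set" where
  "A_sigma1 M \<xi> \<sigma> h x = {\<omega> \<in> space M. first_passage \<xi> x \<omega> \<le> \<sigma> \<omega> \<and>
      (\<exists>n. first_passage \<xi> x \<omega> = enat n \<and> rw \<xi> (n - 1) \<omega> \<le> h x)}"

definition enat_stopping_time :: "(nat \<Rightarrow> 'a measure) \<Rightarrow> ('a \<Rightarrow> enat) \<Rightarrow> bool" where
  "enat_stopping_time Fil \<sigma> \<longleftrightarrow> (\<forall>n::nat. {\<omega> \<in> space (Fil n). \<sigma> \<omega> \<le> enat n} \<in> sets (Fil n))"

end

theory Submission imports Defs begin

lemma rw_0[simp]: "rw \<xi> 0 \<omega> = 0" by (simp add: rw_def)
lemma rw_Suc: "rw \<xi> (Suc i) \<omega> = rw \<xi> i \<omega> + \<xi> (Suc i) \<omega>"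
  by (simp add: rw_def)

lemma fp_eq: "first_passage \<xi> x \<omega> = enat n \<longleftrightarrow> (rw \<xi> n \<omega> > x \<and> (\<forall>k<n. rw \<xi> k \<omega> \<le> x))"
proof
  assume a: "first_passage \<xi> x \<omega> = enat n"
  then have ex: "\<exists>n. rw \<xi> n \<omega> > x" by (auto simp: first_passage_def split: if_splits)
  with a have n: "n = (LEAST n. rw \<xi> n \<omega> > x)" by (simp add: first_passage_def)
  show "rw \<xi> n \<omega> > x \<and> (\<forall>k<n. rw \<xi> k \<omega> \<le> x)"
    using LeastI_ex[OF ex] not_less_Least n by (metis not_less)
next
  assume b: "rw \<xi> n \<omega> > x \<and> (\<forall>k<n. rw \<xi> k \<omega> \<le> x)"
  then have "(LEAST n. rw \<xi> n \<omega> > x) = n"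
    by (intro Least_equality) (auto simp: not_less[symmetric])
  with b show "first_passage \<xi> x \<omega> = enat n" by (auto simp: first_passage_def)
qed

lemma nn_integral_enat_sets:
  assumes F: "\<And>i::nat. {x\<in>space M. enat i < f x} \<in> sets M"
  shows "(\<integral>\<^sup>+ x. ennreal_of_enat (f x) \<partial>M) = (\<Sum>t. emeasure M {x \<in> space M. enat t < f x})"
proof -
  define F where "F i = {x\<in>space M. enat i < f x}" for i :: nat
  with assms have [measurable]: "\<And>i. F i \<in> sets M"
    by auto
  { fix x assume "x \<in> space M"
    have "(\<lambda>i::nat. if i < f x then 1 else 0) sums ennreal_of_enat (f x)"
      using sums_If_finite[of "\<lambda>r. r < f x" "\<lambda>_. 1 :: ennreal"]
      by (cases "f x") (simp_all add: sums_def of_nat_tendsto_top_ennreal)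
    also have "(\<lambda>i. (if i < f x then 1 else 0)) = (\<lambda>i. indicator (F i) x)"
      using \<open>x \<in> space M\<close> by (simp add: one_ennreal_def F_def fun_eq_iff)
    finally have "ennreal_of_enat (f x) = (\<Sum>i. indicator (F i) x)"
      by (simp add: sums_iff) }
  then have "(\<integral>\<^sup>+x. ennreal_of_enat (f x) \<partial>M) = (\<integral>\<^sup>+x. (\<Sum>i. indicator (F i) x) \<partial>M)"
    by (simp cong: nn_integral_cong)
  also have "\<dots> = (\<Sum>i. emeasure M (F i))"
    by (simp add: nn_integral_suminf)
  finally show ?thesis
    by (simp add: F_def)
qed

theorem lemma1:
  fixes M :: "'a measure" and \<xi> :: "nat \<Rightarrow> 'a \<Rightarrow> real"
    and Fil :: "nat \<Rightarrow> 'a measure" and \<sigma> :: "'a \<Rightarrow> enat" and h :: "real \<Rightarrow> real"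
  assumes P: "prob_space M"
    \<comment> \<open>i.i.d. with finite negative mean\<close>
    and rv: "\<And>n. n \<ge> 1 \<Longrightarrow> \<xi> n \<in> borel_measurable M"
    and indep: "prob_space.indep_vars M (\<lambda>_. borel) \<xi> {1..}"
    and ident: "\<And>n. n \<ge> 1 \<Longrightarrow> distr M borel (\<xi> n) = distr M borel (\<xi> 1)"
    and integ: "integrable M (\<xi> 1)"
    and neg_mean: "prob_space.expectation M (\<xi> 1) < 0"
    \<comment> \<open>long-tailed distribution; \<open>F\<^sup>-(x) = P(\<xi>_1 > x)\<close>\<close>
    and tail_pos: "\<And>x. measure M {\<omega> \<in> space M. \<xi> 1 \<omega> > x} > 0"
    and long_tailed: "\<And>c. c > 0 \<Longrightarrow>
        ((\<lambda>x. measure M {\<omega> \<in> space M. \<xi> 1 \<omega> > x - c} / measure M {\<omega> \<in> space M. \<xi> 1 \<omega> > x})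
          \<longlongrightarrow> 1) at_top"
    \<comment> \<open>conditions (h1)-(h4) on \<open>h : R+ \<rightarrow> R+\<close>\<close>
    and h_nonneg: "\<And>x. x \<ge> 0 \<Longrightarrow> h x \<ge> 0"
    and h1: "\<And>x. x \<ge> 0 \<Longrightarrow> h x \<le> x / 2"
    and h2: "filterlim h at_top at_top"
    and h3: "((\<lambda>x. measure M {\<omega> \<in> space M. \<xi> 1 \<omega> > x - h x} / measure M {\<omega> \<in> space M. \<xi> 1 \<omega> > x})
          \<longlongrightarrow> 1) at_top"
    and h4: "\<exists>x0. \<forall>x\<ge>x0. \<forall>t\<ge>0. h (x + t) \<le> h x + t"
    \<comment> \<open>admissible filtration\<close>
    and Fil_space: "\<And>n. space (Fil n) = space M"
    and Fil_sets: "\<And>n. sets (Fil n) \<subseteq> sets M"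
    and Fil_mono: "\<And>n. sets (Fil n) \<subseteq> sets (Fil (Suc n))"
    and adapted: "\<And>n. n \<ge> 1 \<Longrightarrow> \<xi> n \<in> borel_measurable (Fil n)"
    and indep_next: "\<And>n. prob_space.indep_set M (sets (Fil n))
                              (sets (vimage_algebra (space M) (\<xi> (Suc n)) borel))"
    \<comment> \<open>stopping time with finite mean\<close>
    and stop: "enat_stopping_time Fil \<sigma>"
    and fin_mean: "(\<integral>\<^sup>+ \<omega>. ennreal_of_enat (\<sigma> \<omega>) \<partial>M) < \<infinity>"
  shows "((\<lambda>x. measure M (A_sigma1 M \<xi> \<sigma> h x) / measure M {\<omega> \<in> space M. \<xi> 1 \<omega> > x})
           \<longlongrightarrow> enn2real (\<integral>\<^sup>+ \<omega>. ennreal_of_enat (\<sigma> \<omega>) \<partial>M)) at_top"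
proof -
  interpret prob_space M by (rule P)
  define S where "S = rw \<xi>"
  define G where "G y = measure M {\<omega> \<in> space M. \<xi> 1 \<omega> > y}" for y
  define a where "a i = measure M {\<omega> \<in> space M. enat i < \<sigma> \<omega>}" for i
  define L where "L = enn2real (\<integral>\<^sup>+ \<omega>. ennreal_of_enat (\<sigma> \<omega>) \<partial>M)"
  have Fil_le: "sets (Fil i) \<subseteq> sets (Fil k)" if "i \<le> k" for i k
    using lift_Suc_mono_le[of "\<lambda>n. sets (Fil n)", OF Fil_mono that] .
  have xi_Fil: "\<xi> i \<in> borel_measurable (Fil k)" if "1 \<le> i" "i \<le> k" for i k
    using measurable_mono[of borel borel "Fil i" "Fil k"] Fil_le[OF that(2)] Fil_space adapted[OF that(1)]
    by auto
  have S_Fil: "S k \<in> borel_measurable (Fil k)" for k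
    unfolding S_def rw_def by (intro borel_measurable_sum xi_Fil) auto
  have S_M[measurable]: "S k \<in> borel_measurable M" for k
    using measurable_mono[of borel borel "Fil k" M] Fil_sets Fil_space S_Fil by auto
  have sig_Fil: "{\<omega> \<in> space M. enat i < \<sigma> \<omega>} \<in> sets (Fil i)" for i
  proof -
    have "{\<omega> \<in> space M. enat i < \<sigma> \<omega>} = space (Fil i) - {\<omega> \<in> space (Fil i). \<sigma> \<omega> \<le> enat i}"
      using Fil_space by auto
    then show ?thesis using stop unfolding enat_stopping_time_def by auto
  qed
  have sig_M[measurable]: "Measurable.pred M (\<lambda>\<omega>. enat i < \<sigma> \<omega>)" for i
    using sig_Fil[of i] Fil_sets by (auto simp: pred_def)
  have sig_M'[measurable]: "Measurable.pred M (\<lambda>\<omega>. enat i \<le> \<sigma> \<omega>)" for i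
  proof (cases i)
    case 0 then show ?thesis by (simp add: zero_enat_def[symmetric])
  next
    case (Suc j) then show ?thesis using sig_M[of j] by (simp add: Suc_ile_eq)
  qed
  have xi_M[measurable]: "\<xi> (Suc i) \<in> borel_measurable M" for i using rv by simp
  have tailn: "prob {\<omega> \<in> space M. \<xi> (Suc i) \<omega> > y} = G y" for i y
  proof -
    have "prob {\<omega> \<in> space M. \<xi> (Suc i) \<omega> > y} = measure (distr M borel (\<xi> (Suc i))) {y<..}"
      by (subst measure_distr) (auto simp: vimage_def Int_def conj_commute)
    also have "\<dots> = measure (distr M borel (\<xi> 1)) {y<..}" using ident[of "Suc i"] by simp
    also have "\<dots> = G y" unfolding G_def using rv[of 1]
      by (subst measure_distr) (auto simp: vimage_def Int_def conj_commute)
    finally show ?thesis .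
  qed
  have indep: "prob (b \<inter> {\<omega> \<in> space M. \<xi> (Suc i) \<omega> > y}) = prob b * G y"
    if "b \<in> sets (Fil i)" for b i y
  proof -
    have "{\<omega> \<in> space M. \<xi> (Suc i) \<omega> > y} = \<xi> (Suc i) -` {y<..} \<inter> space M" by auto
    also have "\<dots> \<in> sets (vimage_algebra (space M) (\<xi> (Suc i)) borel)"
      by (rule in_vimage_algebra) simp
    finally show ?thesis using indep_setD[OF indep_next[of i] that] tailn by simp
  qed
  have L_sums: "a sums L"
  proof -
    have "(\<integral>\<^sup>+ \<omega>. ennreal_of_enat (\<sigma> \<omega>) \<partial>M) = (\<Sum>t. ennreal (a t))"
      unfolding a_def by (subst nn_integral_enat_sets) (auto simp: emeasure_eq_measure)
    moreover have "(\<lambda>t. ennreal (a t)) sums (\<Sum>t. ennreal (a t))" by (rule summable_sums) simp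
    ultimately have "(\<lambda>t. ennreal (a t)) sums ennreal L"
      using fin_mean unfolding L_def by (simp add: less_top)
    then show ?thesis by (subst (asm) sums_ennreal) (auto simp: a_def L_def)
  qed
  define A where "A x = A_sigma1 M \<xi> \<sigma> h x" for x
  have Gpos: "G y > 0" for y using tail_pos unfolding G_def by simp
  have a_nn: "a i \<ge> 0" for i by (simp add: a_def)
  have upper: "measure M (A x) \<le> L * G (x - h x)" if x0: "x \<ge> 0" for x
  proof -
    define U where "U i = {\<omega> \<in> space M. enat i < \<sigma> \<omega>} \<inter> {\<omega> \<in> space M. \<xi> (Suc i) \<omega> > x - h x}" for i
    have U_m: "range U \<subseteq> sets M" unfolding U_def by auto
    have PU: "measure M (U i) = a i * G (x - h x)" for i
      unfolding U_def a_def by (rule indep[OF sig_Fil])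
    have sU: "(\<lambda>i. measure M (U i)) sums (L * G (x - h x))"
      unfolding PU by (intro sums_mult2 L_sums)
    have sub: "A x \<subseteq> (\<Union>i. U i)"
    proof
      fix \<omega> assume "\<omega> \<in> A x"
      then obtain n where om: "\<omega> \<in> space M" "enat n \<le> \<sigma> \<omega>" "first_passage \<xi> x \<omega> = enat n"
        "rw \<xi> (n - 1) \<omega> \<le> h x"
        unfolding A_def A_sigma1_def by auto
      from om(3) have fp: "rw \<xi> n \<omega> > x" "\<forall>k<n. rw \<xi> k \<omega> \<le> x" by (auto simp: fp_eq)
      have "n \<noteq> 0" using fp x0 by (metis not_less rw_0)
      then obtain i where n: "n = Suc i" by (cases n) auto
      have "\<xi> (Suc i) \<omega> > x - h x" using fp(1) om(4) unfolding n by (simp add: rw_Suc)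
      moreover have "enat i < \<sigma> \<omega>" using om(2) n by (simp add: Suc_ile_eq)
      ultimately show "\<omega> \<in> (\<Union>i. U i)" using om(1) unfolding U_def by auto
    qed
    have "measure M (A x) \<le> measure M (\<Union>i. U i)"
      using sub U_m by (intro finite_measure_mono) auto
    also have "\<dots> \<le> (\<Sum>i. measure M (U i))"
      using U_m sU by (intro finite_measure_subadditive_countably) (auto simp: sums_iff)
    also have "\<dots> = L * G (x - h x)" using sU by (simp add: sums_iff)
    finally show ?thesis .
  qed
  have rw_M[measurable]: "rw \<xi> k \<in> borel_measurable M" for k using S_M[of k] by (simp add: S_def)
  have A_m: "A x \<in> sets M" for x
  proof -
    have "A x = (\<Union>n. {\<omega> \<in> space M. enat n \<le> \<sigma> \<omega> \<and> rw \<xi> n \<omega> > x \<and> (\<forall>k\<in>{..<n}. rw \<xi> k \<omega> \<le> x)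
                   \<and> rw \<xi> (n - 1) \<omega> \<le> h x})"
    proof (intro set_eqI iffI)
      fix \<omega> assume "\<omega> \<in> A x"
      then obtain n where "\<omega> \<in> space M" "first_passage \<xi> x \<omega> \<le> \<sigma> \<omega>" "first_passage \<xi> x \<omega> = enat n"
        "rw \<xi> (n - 1) \<omega> \<le> h x" unfolding A_def A_sigma1_def by auto
      then show "\<omega> \<in> (\<Union>n. {\<omega> \<in> space M. enat n \<le> \<sigma> \<omega> \<and> rw \<xi> n \<omega> > x \<and> (\<forall>k\<in>{..<n}. rw \<xi> k \<omega> \<le> x)
                   \<and> rw \<xi> (n - 1) \<omega> \<le> h x})" by (auto simp: fp_eq)
    next
      fix \<omega> assume "\<omega> \<in> (\<Union>n. {\<omega> \<in> space M. enat n \<le> \<sigma> \<omega> \<and> rw \<xi> n \<omega> > x \<and> (\<forall>k\<in>{..<n}. rw \<xi> k \<omega> \<le> x)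
                   \<and> rw \<xi> (n - 1) \<omega> \<le> h x})"
      then obtain n where "\<omega> \<in> space M" "enat n \<le> \<sigma> \<omega>" "rw \<xi> n \<omega> > x" "\<forall>k<n. rw \<xi> k \<omega> \<le> x"
        "rw \<xi> (n - 1) \<omega> \<le> h x" by auto
      moreover then have "first_passage \<xi> x \<omega> = enat n" by (simp add: fp_eq)
      ultimately show "\<omega> \<in> A x" unfolding A_def A_sigma1_def by auto
    qed
    also have "\<dots> \<in> sets M" by measurable
    finally show ?thesis .
  qed
  define T where "T k t = prob {\<omega> \<in> space M. S k \<omega> > t}" for k t
  define Q where "Q k t = prob {\<omega> \<in> space M. S k \<omega> \<le> t}" for k t
  have T_lim: "(T k \<longlongrightarrow> 0) at_top" for k
  proof -
    interpret D: real_distribution "distr M borel (S k)" by simp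
    have "T k t = 1 - cdf (distr M borel (S k)) t" for t
    proof -
      have "{\<omega> \<in> space M. S k \<omega> > t} = space M - {\<omega> \<in> space M. S k \<omega> \<le> t}" by auto
      then have "T k t = 1 - prob {\<omega> \<in> space M. S k \<omega> \<le> t}" unfolding T_def
        by (simp add: prob_compl)
      also have "prob {\<omega> \<in> space M. S k \<omega> \<le> t} = cdf (distr M borel (S k)) t"
        unfolding cdf_def by (subst measure_distr) (auto simp: vimage_def Int_def conj_commute)
      finally show ?thesis .
    qed
    then have "T k = (\<lambda>t. 1 - cdf (distr M borel (S k)) t)" by auto
    moreover have "((\<lambda>t. 1 - cdf (distr M borel (S k)) t) \<longlongrightarrow> 1 - 1) at_top"
      by (intro tendsto_intros D.cdf_lim_at_top_prob)
    ultimately show ?thesis by simp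
  qed
  have Q_lim: "((\<lambda>c. Q k (- c)) \<longlongrightarrow> 0) at_top" for k
  proof -
    interpret D: real_distribution "distr M borel (S k)" by simp
    have "Q k t = cdf (distr M borel (S k)) t" for t
      unfolding cdf_def Q_def by (subst measure_distr) (auto simp: vimage_def Int_def conj_commute)
    then show ?thesis
      using filterlim_compose[OF D.cdf_lim_at_bot filterlim_uminus_at_bot_at_top] by simp
  qed
  define C where "C c i = {\<omega> \<in> space M. enat i < \<sigma> \<omega> \<and> S i \<omega> > - c}" for c i
  have C_m[measurable]: "C c i \<in> sets M" for c i unfolding C_def by measurable
  have C_lim: "((\<lambda>c. measure M (C c i)) \<longlongrightarrow> a i) at_top" for i
  proof (rule tendsto_sandwich)
    show "\<forall>\<^sub>F c in at_top. a i - Q i (- c) \<le> measure M (C c i)"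
    proof (intro always_eventually allI)
      fix c
      have "{\<omega> \<in> space M. enat i < \<sigma> \<omega>} \<subseteq> C c i \<union> {\<omega> \<in> space M. S i \<omega> \<le> - c}"
        unfolding C_def by auto
      then have "a i \<le> measure M (C c i \<union> {\<omega> \<in> space M. S i \<omega> \<le> - c})" unfolding a_def
        by (intro finite_measure_mono) auto
      also have "\<dots> \<le> measure M (C c i) + Q i (- c)" unfolding Q_def
        by (intro measure_subadditive) auto
      finally show "a i - Q i (- c) \<le> measure M (C c i)" by simp
    qed
    show "\<forall>\<^sub>F c in at_top. measure M (C c i) \<le> a i"
      unfolding a_def C_def by (intro always_eventually allI finite_measure_mono) auto
    show "((\<lambda>c. a i - Q i (- c)) \<longlongrightarrow> a i) at_top"
      using tendsto_diff[OF tendsto_const Q_lim[of i]] by simp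
  qed simp
  have SF: "S k \<in> borel_measurable (Fil i)" if "k \<le> i" for k i
    using measurable_mono[of borel borel "Fil k" "Fil i"] Fil_le[OF that] Fil_space S_Fil by auto
  have lower: "measure M (A x) \<ge> (\<Sum>i<N. measure M (C c i) - (\<Sum>k\<le>i. T k (h x))) * G (x + c)"
    if x0: "x \<ge> 0" and c0: "c \<ge> 0" for x c N
  proof -
    define B where "B i = {\<omega> \<in> space M. enat i < \<sigma> \<omega> \<and> (\<forall>k\<in>{..i}. S k \<omega> \<le> h x) \<and> S i \<omega> > - c}" for i
    define E where "E i = B i \<inter> {\<omega> \<in> space M. \<xi> (Suc i) \<omega> > x + c}" for i
    have hx: "h x \<le> x" "h x \<ge> 0" using h1[OF x0] h_nonneg[OF x0] x0 by auto
    have B_Fil: "B i \<in> sets (Fil i)" for i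
    proof -
      have p1: "Measurable.pred (Fil i) (\<lambda>\<omega>. S k \<omega> \<le> t)" if "k \<in> {..i}" for k t
      proof -
        have [measurable]: "S k \<in> borel_measurable (Fil i)" using SF[of k i] that by simp
        show ?thesis by measurable
      qed
      have p2: "Measurable.pred (Fil i) (\<lambda>\<omega>. \<forall>k\<in>{..i}. S k \<omega> \<le> h x)"
        by (rule pred_intros_countable_bounded) (auto intro: p1)
      have p3: "Measurable.pred (Fil i) (\<lambda>\<omega>. S i \<omega> > - c)"
        using SF[of i i] by measurable
      have p4: "Measurable.pred (Fil i) (\<lambda>\<omega>. enat i < \<sigma> \<omega>)"
        using sig_Fil[of i] Fil_space by (simp add: pred_def)
      have "Measurable.pred (Fil i) (\<lambda>\<omega>. enat i < \<sigma> \<omega> \<and> (\<forall>k\<in>{..i}. S k \<omega> \<le> h x) \<and> S i \<omega> > - c)"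
        using p2 p3 p4 by (intro pred_intros_logic) auto
      then show ?thesis unfolding B_def pred_def using Fil_space by simp
    qed
    have B_m: "B i \<in> sets M" for i using B_Fil Fil_sets by blast
    have PE: "measure M (E i) = measure M (B i) * G (x + c)" for i
      unfolding E_def by (rule indep[OF B_Fil])
    have E_m: "E i \<in> sets M" for i unfolding E_def using B_m by auto
    have ESuc: "S (Suc i) \<omega> > x" if "\<omega> \<in> E i" for i \<omega>
      using that unfolding E_def B_def by (auto simp: S_def rw_Suc)
    have Ele: "S k \<omega> \<le> x" if "\<omega> \<in> E i" "k \<le> i" for i k \<omega>
    proof -
      have "\<forall>k\<in>{..i}. S k \<omega> \<le> h x" using that(1) unfolding E_def B_def by blast
      then have "S k \<omega> \<le> h x" using that(2) by simp
      then show ?thesis using hx by linarith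
    qed
    have EA: "E i \<subseteq> A x" for i
    proof
      fix \<omega> assume om: "\<omega> \<in> E i"
      have "first_passage \<xi> x \<omega> = enat (Suc i)"
        using ESuc[OF om] Ele[OF om] unfolding fp_eq S_def by (auto simp: less_Suc_eq_le)
      moreover have "enat (Suc i) \<le> \<sigma> \<omega>" "rw \<xi> i \<omega> \<le> h x" "\<omega> \<in> space M"
        using om unfolding E_def B_def S_def by (auto simp: Suc_ile_eq)
      ultimately show "\<omega> \<in> A x" unfolding A_def A_sigma1_def by auto
    qed
    have disj: "disjoint_family_on E {..<N}"
    proof -
      have "E i \<inter> E j = {}" if "i < j" for i j
        using ESuc[of _ i] Ele[of _ j "Suc i"] that by fastforce
      then show ?thesis unfolding disjoint_family_on_def
        by (metis inf_commute linorder_neqE_nat)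
    qed
    have CB: "measure M (C c i) \<le> measure M (B i) + (\<Sum>k\<le>i. T k (h x))" for i
    proof -
      have "C c i \<subseteq> B i \<union> (\<Union>k\<in>{..i}. {\<omega> \<in> space M. S k \<omega> > h x})"
        unfolding C_def B_def by auto
      then have "measure M (C c i) \<le> measure M (B i \<union> (\<Union>k\<in>{..i}. {\<omega> \<in> space M. S k \<omega> > h x}))"
        using B_m by (intro finite_measure_mono) auto
      also have "\<dots> \<le> measure M (B i) + measure M (\<Union>k\<in>{..i}. {\<omega> \<in> space M. S k \<omega> > h x})"
        using B_m by (intro measure_subadditive) auto
      also have "measure M (\<Union>k\<in>{..i}. {\<omega> \<in> space M. S k \<omega> > h x}) \<le> (\<Sum>k\<le>i. T k (h x))"
        unfolding T_def by (intro finite_measure_subadditive_finite) auto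
      finally show ?thesis by simp
    qed
    have "(\<Sum>i<N. measure M (C c i) - (\<Sum>k\<le>i. T k (h x))) * G (x + c)
          \<le> (\<Sum>i<N. measure M (B i)) * G (x + c)"
      using CB Gpos[of "x + c"] by (intro mult_right_mono sum_mono) (auto simp: algebra_simps)
    also have "\<dots> = (\<Sum>i<N. measure M (E i))" by (simp add: PE sum_distrib_right)
    also have "\<dots> = measure M (\<Union>i\<in>{..<N}. E i)"
      using disj E_m by (intro finite_measure_finite_Union[symmetric]) auto
    also have "\<dots> \<le> measure M (A x)" using EA A_m by (intro finite_measure_mono) auto
    finally show ?thesis .
  qed
  define f where "f x = measure M (A x) / G x" for x
  have "(f \<longlongrightarrow> L) at_top"
  proof (rule order_tendstoI)
    fix b assume bL: "b > L"
    have r: "((\<lambda>x. L * (G (x - h x) / G x)) \<longlongrightarrow> L * 1) at_top"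
      using h3 unfolding G_def by (intro tendsto_intros)
    have "\<forall>\<^sub>F x in at_top. L * (G (x - h x) / G x) < b"
      using order_tendstoD(2)[OF r] bL by simp
    moreover have "\<forall>\<^sub>F x in at_top. x \<ge> (0::real)" by (rule eventually_ge_at_top)
    ultimately show "\<forall>\<^sub>F x in at_top. f x < b"
    proof eventually_elim
      case (elim x)
      have "f x \<le> L * G (x - h x) / G x" unfolding f_def
        using upper[OF elim(2)] Gpos[of x] by (intro divide_right_mono) auto
      then show ?case using elim(1) by simp
    qed
  next
    fix a0 assume aL: "a0 < L"
    have "\<forall>\<^sub>F N in sequentially. (\<Sum>i<N. a i) > a0"
      using order_tendstoD(1)[OF L_sums[unfolded sums_def] aL] .
    then obtain N where N: "(\<Sum>i<N. a i) > a0" by (auto simp: eventually_sequentially)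
    have "((\<lambda>c. \<Sum>i<N. measure M (C c i)) \<longlongrightarrow> (\<Sum>i<N. a i)) at_top"
      by (intro tendsto_sum C_lim)
    from order_tendstoD(1)[OF this N]
    have "\<forall>\<^sub>F c in at_top. (\<Sum>i<N. measure M (C c i)) > a0 \<and> c > (0::real)"
      using eventually_gt_at_top[of "0::real"] by (rule eventually_conj)
    then obtain c where c: "(\<Sum>i<N. measure M (C c i)) > a0" "c > 0"
      by (auto simp: eventually_at_top_linorder)
    have shift: "filterlim (\<lambda>x::real. c + x) at_top at_top"
      by (rule filterlim_tendsto_add_at_top[OF tendsto_const filterlim_ident])
    have "((\<lambda>x. G (c + x - c) / G (c + x)) \<longlongrightarrow> 1) at_top"
      using filterlim_compose[OF long_tailed[OF c(2)] shift] unfolding G_def by simp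
    then have "((\<lambda>x. G x / G (x + c)) \<longlongrightarrow> 1) at_top" by (simp add: add.commute)
    then have lt: "((\<lambda>x. G (x + c) / G x) \<longlongrightarrow> 1) at_top"
      using tendsto_inverse[of "\<lambda>x. G x / G (x + c)" 1 at_top] by simp
    have Th: "((\<lambda>x. T k (h x)) \<longlongrightarrow> 0) at_top" for k
      using filterlim_compose[OF T_lim h2] .
    have g: "((\<lambda>x. (\<Sum>i<N. measure M (C c i) - (\<Sum>k\<le>i. T k (h x))) * (G (x + c) / G x))
              \<longlongrightarrow> (\<Sum>i<N. measure M (C c i) - (\<Sum>k\<le>i. 0)) * 1) at_top"
      by (intro tendsto_intros Th lt)
    have "\<forall>\<^sub>F x in at_top. (\<Sum>i<N. measure M (C c i) - (\<Sum>k\<le>i. T k (h x))) * (G (x + c) / G x) > a0"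
      using order_tendstoD(1)[OF g] c(1) by simp
    moreover have "\<forall>\<^sub>F x in at_top. x \<ge> (0::real)" by (rule eventually_ge_at_top)
    ultimately show "\<forall>\<^sub>F x in at_top. a0 < f x"
    proof eventually_elim
      case (elim x)
      have "(\<Sum>i<N. measure M (C c i) - (\<Sum>k\<le>i. T k (h x))) * (G (x + c) / G x)
            = (\<Sum>i<N. measure M (C c i) - (\<Sum>k\<le>i. T k (h x))) * G (x + c) / G x" by simp
      also have "\<dots> \<le> f x" unfolding f_def
        using lower[OF elim(2), of c N] c(2) Gpos[of x] by (intro divide_right_mono) auto
      finally show ?case using elim(1) by simp
    qed
  qed
  then show ?thesis unfolding f_def A_def G_def L_def .
qed

end
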